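(* Let $a\in[0,\infty)$ and let $\theta:[0,1]\to[0,\infty]$ and $\vartheta:[0,\infty]\to[0,1]$ be continuous and decreasing functions such that (i) $\theta(x)=\frac{a}{2}$ if and only if $x=1$, and (ii) the function $O_{\theta,\vartheta}:[0,1]^2\to[0,1]$, $O_{\theta,\vartheta}(x,y)=\vartheta(\theta(x)+\theta(y))$, is an overlap function. Then $\vartheta(x)=1$ if and only if $x\in[0,a]$.
   Context: "Decreasing" means non-increasing and "increasing" means non-decreasing. Arithmetic in $[0,\infty]$ uses $c+\infty=\infty$; continuity on $[0,\infty]$ refers to the usual topology of the extended half-line. An overlap function is a map $O:[0,1]^2\to[0,1]$ that is (O1) commutative, (O2) $O(x,y)=0$ iff $xy=0$, (O3) $O(x,y)=1$ iff $xy=1$, (O4) increasing in each variable, (O5) continuous. *)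

theory Defs
  imports "HOL-Analysis.Analysis"
begin

definition overlap_function :: "(real \<Rightarrow> real \<Rightarrow> real) \<Rightarrow> bool" where
  "overlap_function F \<longleftrightarrow>
     (\<forall>x\<in>{0..1}. \<forall>y\<in>{0..1}. F x y \<in> {0..1}) \<and>
     (\<forall>x\<in>{0..1}. \<forall>y\<in>{0..1}. F x y = F y x) \<and>
     (\<forall>x\<in>{0..1}. \<forall>y\<in>{0..1}. F x y = 0 \<longleftrightarrow> x * y = 0) \<and>
     (\<forall>x\<in>{0..1}. \<forall>y\<in>{0..1}. F x y = 1 \<longleftrightarrow> x * y = 1) \<and>
     (\<forall>x\<in>{0..1}. \<forall>x'\<in>{0..1}. \<forall>y\<in>{0..1}. x \<le> x' \<longrightarrow> F x y \<le> F x' y) \<and>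
     (\<forall>x\<in>{0..1}. \<forall>y\<in>{0..1}. \<forall>y'\<in>{0..1}. y \<le> y' \<longrightarrow> F x y \<le> F x y') \<and>
     continuous_on ({0..1} \<times> {0..1}) (\<lambda>(x, y). F x y)"

end

theory Submission
  imports Defs
begin

theorem proposition3p2:
  fixes a :: real
    and \<theta> :: "real \<Rightarrow> ennreal"
    and \<phi> :: "ennreal \<Rightarrow> real"
  assumes a_nonneg: "0 \<le> a"
    and theta_cont: "continuous_on {0..1} \<theta>"
    and theta_dec: "\<And>x y. x \<in> {0..1} \<Longrightarrow> y \<in> {0..1} \<Longrightarrow> x \<le> y \<Longrightarrow> \<theta> y \<le> \<theta> x"
    and phi_range: "\<And>t. \<phi> t \<in> {0..1}"
    and phi_cont: "continuous_on UNIV \<phi>"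
    and phi_dec: "\<And>s t. s \<le> t \<Longrightarrow> \<phi> t \<le> \<phi> s"
    and theta_half: "\<And>x. x \<in> {0..1} \<Longrightarrow> (\<theta> x = ennreal (a / 2) \<longleftrightarrow> x = 1)"
    and overlap: "overlap_function (\<lambda>x y. \<phi> (\<theta> x + \<theta> y))"
  shows "\<forall>t. \<phi> t = 1 \<longleftrightarrow> t \<le> ennreal a"
proof -
  have O1: "\<And>x y. x \<in> {0..1} \<Longrightarrow> y \<in> {0..1} \<Longrightarrow> \<phi> (\<theta> x + \<theta> y) = 1 \<longleftrightarrow> x * y = 1"
    using overlap unfolding overlap_function_def by blast
  have t1: "\<theta> 1 = ennreal (a/2)" using theta_half by auto
  have t11: "\<theta> 1 + \<theta> 1 = ennreal a"
    using t1 a_nonneg by (simp add: ennreal_plus[symmetric])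
  have pa: "\<phi> (ennreal a) = 1" using O1[of 1 1] t11 by simp
  show ?thesis
  proof (intro allI iffI)
    fix t assume "t \<le> ennreal a"
    then have "\<phi> (ennreal a) \<le> \<phi> t" by (rule phi_dec)
    then show "\<phi> t = 1" using pa phi_range[of t] by auto
  next
    fix t assume pt: "\<phi> t = 1"
    show "t \<le> ennreal a"
    proof (rule ccontr)
      assume "\<not> t \<le> ennreal a"
      then have lt: "\<theta> 1 + \<theta> 1 < t" using t11 by simp
      define g where "g = (\<lambda>x. \<theta> x + \<theta> 1)"
      have gc: "continuous_on {0..1} g" unfolding g_def
        by (intro continuous_on_add theta_cont continuous_on_const)
      define xs where "xs = (\<lambda>n::nat. 1 - 1 / (real n + 2))"
      have xs_in: "xs n \<in> {0..1}" for n unfolding xs_def by (auto simp: field_simps)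
      have "xs \<longlonglongrightarrow> 1 - 0" unfolding xs_def
        by (intro tendsto_intros) real_asymp
      then have "xs \<longlonglongrightarrow> 1" by simp
      then have "(\<lambda>n. g (xs n)) \<longlonglongrightarrow> g 1"
        using gc xs_in by (intro continuous_on_tendsto_compose[OF gc]) auto
      then have "eventually (\<lambda>n. g (xs n) < t) sequentially"
        using lt unfolding g_def by (intro order_tendstoD(2)) auto
      then obtain n where "g (xs n) < t" by (meson eventually_sequentially order_refl)
      then have "\<phi> t \<le> \<phi> (g (xs n))" by (intro phi_dec) simp
      then have "\<phi> (\<theta> (xs n) + \<theta> 1) = 1" using pt phi_range[of "g (xs n)"] unfolding g_def by auto
      then have "xs n = 1" using O1[of "xs n" 1] xs_in by simp
      then show False unfolding xs_def by simp
    qed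
  qed
qed

end
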